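(* Let $G\ge1$ and, for each group $v\in\{1,\ldots,G\}$, let $X_{v1},\ldots,X_{vN_v}\in L^2[0,1]$ be observed functions (assumed mean zero). Fix a number of layers $D\ge1$ and, for each layer $d=1,\ldots,D$, a partition of $\{1,\ldots,G\}$ into disjoint communities $\mathcal{K}_{d1},\mathcal{K}_{d2},\ldots$, such that the partitions are nested: every community of layer $d$ is contained in some community of layer $d-1$ ($d\ge2$). Write $c_{v,d}$ for the index $i$ of the community $\mathcal{K}_{di}$ containing $v$. Fix weights $f_v^{(d-1)}>0$. Define recursively, for $d=1,\ldots,D$: $R^{(0)}_{vn}=X_{vn}$; $$\widehat\Gamma^{(d-1)}_v(\cdot)=\frac1{N_v}\sum_{n=1}^{N_v}\langle R^{(d-1)}_{vn},\cdot\rangle R^{(d-1)}_{vn};$$ for each community $\mathcal{K}_{di}$, let $\hat\psi_{di}$ be a unit-norm eigenfunction of $\sum_{v\in\mathcal{K}_{di}}f^{(d-1)}_v\widehat\Gamma^{(d-1)}_v$ associated with its largest eigenvalue, assumed strictly positive (equivalently, $\hat\psi_{di}$ maximizes $\sum_{v\in\mathcal{K}_{di}}\sum_{n=1}^{N_v}N_v^{-1}f_v^{(d-1)}\langle R^{(d-1)}_{vn},\phi\rangle^2$ over $\|\phi\|=1$); set $\hat\phi_d^{(c_{v,d})}=\hat\psi_{di}$ for $v\in\mathcal{K}_{di}$; and set $$R^{(d)}_{vn}=X_{vn}-\sum_{j=1}^{d}\langle X_{vn},\hat\phi_j^{(c_{v,j})}\rangle\hat\phi_j^{(c_{v,j})}.$$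 Then for every group $v$, the functions $\hat\phi_1^{(c_{v,1})},\ldots,\hat\phi_D^{(c_{v,D})}$ are orthonormal in $L^2[0,1]$, i.e. $\langle\hat\phi_d^{(c_{v,d})},\hat\phi_{d'}^{(c_{v,d'})}\rangle=0$ for $d\neq d'$ and $\|\hat\phi_d^{(c_{v,d})}\|=1$.
   Context: $L^2[0,1]$ is equipped with the inner product $\langle x,y\rangle=\int_0^1 x(t)y(t)\,dt$ and norm $\|x\|^2=\langle x,x\rangle$. A "community" is a set of groups that share one common filtrated functional principal component in a given layer; the communities of each layer form a partition of the groups, and the partitions across layers form a tree (nested) structure. *)

theory Defs
  imports "HOL-Analysis.Analysis"
begin

text \<open>Elements of L^2[0,1] are represented by real functions on the reals that are
  Lebesgue measurable on [0,1] and square integrable there; functions are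
  identified up to a.e. equality only through the inner product.\<close>

definition L2 :: "(real \<Rightarrow> real) set" where
  "L2 = {x. x \<in> borel_measurable (lebesgue_on {0..1}) \<and> (\<lambda>t. (x t)^2) integrable_on {0..1}}"

definition l2ip :: "(real \<Rightarrow> real) \<Rightarrow> (real \<Rightarrow> real) \<Rightarrow> real" where
  "l2ip x y = integral {0..1} (\<lambda>t. x t * y t)"

definition l2norm :: "(real \<Rightarrow> real) \<Rightarrow> real" where
  "l2norm x = sqrt (l2ip x x)"

definition l2eq :: "(real \<Rightarrow> real) \<Rightarrow> (real \<Rightarrow> real) \<Rightarrow> bool" where
  "l2eq x y \<longleftrightarrow> l2norm (\<lambda>t. x t - y t) = 0"

definition is_eigenfunction ::
  "((real \<Rightarrow> real) \<Rightarrow> (real \<Rightarrow> real)) \<Rightarrow> (real \<Rightarrow> real) \<Rightarrow> real \<Rightarrow> bool" where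
  "is_eigenfunction T phi lam \<longleftrightarrow>
     phi \<in> L2 \<and> \<not> l2eq phi (\<lambda>t. 0) \<and> l2eq (T phi) (\<lambda>t. lam * phi t)"

definition is_top_unit_eigenfunction ::
  "((real \<Rightarrow> real) \<Rightarrow> (real \<Rightarrow> real)) \<Rightarrow> (real \<Rightarrow> real) \<Rightarrow> bool" where
  "is_top_unit_eigenfunction T phi \<longleftrightarrow>
     l2norm phi = 1 \<and>
     (\<exists>lam. lam > 0 \<and> is_eigenfunction T phi lam \<and>
        (\<forall>mu psi. is_eigenfunction T psi mu \<longrightarrow> mu \<le> lam))"

text \<open>Community membership: c d v is the index of the community of layer d containing v;
  psi d i is the estimated component of community i of layer d.\<close>
definition comm_phi :: "(nat \<Rightarrow> nat \<Rightarrow> real \<Rightarrow> real) \<Rightarrow> (nat \<Rightarrow> nat \<Rightarrow> nat) \<Rightarrow> nat \<Rightarrow> nat \<Rightarrow> real \<Rightarrow> real" where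
  "comm_phi psi c d v = psi d (c d v)"

definition resid ::
  "(nat \<Rightarrow> nat \<Rightarrow> real \<Rightarrow> real) \<Rightarrow> (nat \<Rightarrow> nat \<Rightarrow> real \<Rightarrow> real) \<Rightarrow> (nat \<Rightarrow> nat \<Rightarrow> nat)
     \<Rightarrow> nat \<Rightarrow> nat \<Rightarrow> nat \<Rightarrow> real \<Rightarrow> real" where
  "resid X psi c d v n = (\<lambda>t. X v n t -
      (\<Sum>j=1..d. l2ip (X v n) (comm_phi psi c j v) * comm_phi psi c j v t))"

definition cov_op ::
  "(nat \<Rightarrow> nat) \<Rightarrow> (nat \<Rightarrow> nat \<Rightarrow> real \<Rightarrow> real) \<Rightarrow> (nat \<Rightarrow> nat \<Rightarrow> real \<Rightarrow> real) \<Rightarrow> (nat \<Rightarrow> nat \<Rightarrow> nat)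
     \<Rightarrow> nat \<Rightarrow> nat \<Rightarrow> (real \<Rightarrow> real) \<Rightarrow> real \<Rightarrow> real" where
  "cov_op N X psi c d v phi = (\<lambda>t. (1 / real (N v)) *
      (\<Sum>n=1..N v. l2ip (resid X psi c (d - 1) v n) phi * resid X psi c (d - 1) v n t))"

text \<open>Weighted community operator sum_{v in K_{di}} f^{(d-1)}_v Gamma^{(d-1)}_v, where
  K_{di} = {v in {1..G}. c d v = i} and f d v stands for f^{(d-1)}_v.\<close>
definition comm_op ::
  "nat \<Rightarrow> (nat \<Rightarrow> nat) \<Rightarrow> (nat \<Rightarrow> nat \<Rightarrow> real \<Rightarrow> real) \<Rightarrow> (nat \<Rightarrow> nat \<Rightarrow> real)
     \<Rightarrow> (nat \<Rightarrow> nat \<Rightarrow> real \<Rightarrow> real) \<Rightarrow> (nat \<Rightarrow> nat \<Rightarrow> nat)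
     \<Rightarrow> nat \<Rightarrow> nat \<Rightarrow> (real \<Rightarrow> real) \<Rightarrow> real \<Rightarrow> real" where
  "comm_op G N X f psi c d i phi = (\<lambda>t.
      \<Sum>v\<in>{v\<in>{1..G}. c d v = i}. f d v * cov_op N X psi c d v phi t)"

end

theory Submission
  imports Defs
begin

lemma L2_mult_int:
  assumes "x \<in> L2" "y \<in> L2"
  shows "(\<lambda>t. x t * y t) integrable_on {0..1}"
proof (rule measurable_bounded_by_integrable_imp_integrable_real)
  show "(\<lambda>t. x t * y t) \<in> borel_measurable (lebesgue_on {0..1})"
    using assms unfolding L2_def by (auto intro: borel_measurable_times)
  show "(\<lambda>t. (x t)^2/2 + (y t)^2/2) integrable_on {0..1}"
    using assms unfolding L2_def
    by (intro integrable_add integrable_on_divide) auto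
  show "\<bar>x t * y t\<bar> \<le> (x t)^2/2 + (y t)^2/2" for t
  proof -
    have "0 \<le> (\<bar>x t\<bar> - \<bar>y t\<bar>)^2" by simp
    then show ?thesis by (simp add: power2_eq_square algebra_simps abs_mult)
  qed
qed auto

lemma L2_add: "x \<in> L2 \<Longrightarrow> y \<in> L2 \<Longrightarrow> (\<lambda>t. x t + y t) \<in> L2"
proof -
  assume a: "x \<in> L2" "y \<in> L2"
  have "(\<lambda>t. (x t)^2 + 2 * (x t * y t) + (y t)^2) integrable_on {0..1}"
    using a L2_mult_int[OF a] unfolding L2_def
    by (intro integrable_add integrable_on_cmult_left) auto
  then show ?thesis using a unfolding L2_def
    by (auto intro: borel_measurable_add simp: power2_sum algebra_simps)
qed

lemma L2_scale: "x \<in> L2 \<Longrightarrow> (\<lambda>t. a * x t) \<in> L2"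
  unfolding L2_def
  using integrable_on_cmult_left[of "\<lambda>t. (x t)^2" "{0..1}" "a^2"]
  by (auto intro: borel_measurable_times simp: power_mult_distrib)

lemma L2_neg: "x \<in> L2 \<Longrightarrow> (\<lambda>t. - x t) \<in> L2"
  using L2_scale[of x "-1"] by simp

lemma L2_diff: "x \<in> L2 \<Longrightarrow> y \<in> L2 \<Longrightarrow> (\<lambda>t. x t - y t) \<in> L2"
  using L2_add[OF _ L2_neg[of y]] by simp

lemma L2_zero: "(\<lambda>t. 0) \<in> L2"
  unfolding L2_def by auto

lemma L2_sum: "finite J \<Longrightarrow> (\<And>j. j \<in> J \<Longrightarrow> g j \<in> L2) \<Longrightarrow> (\<lambda>t. \<Sum>j\<in>J. g j t) \<in> L2"
proof (induction J rule: finite_induct)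
  case empty then show ?case by (simp add: L2_zero)
next
  case (insert a J)
  then show ?case using L2_add[of "g a" "\<lambda>t. \<Sum>j\<in>J. g j t"] by simp
qed

lemma l2ip_sym: "l2ip x y = l2ip y x"
  unfolding l2ip_def by (simp add: mult.commute)

lemma l2ip_add: "x \<in> L2 \<Longrightarrow> y \<in> L2 \<Longrightarrow> z \<in> L2 \<Longrightarrow>
   l2ip (\<lambda>t. x t + y t) z = l2ip x z + l2ip y z"
  unfolding l2ip_def using L2_mult_int[of x z] L2_mult_int[of y z]
  by (simp add: distrib_right integral_add)

lemma l2ip_scale: "l2ip (\<lambda>t. a * x t) z = a * l2ip x z"
  unfolding l2ip_def by (simp add: mult.assoc)

lemma l2ip_diff: "x \<in> L2 \<Longrightarrow> y \<in> L2 \<Longrightarrow> z \<in> L2 \<Longrightarrow>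
   l2ip (\<lambda>t. x t - y t) z = l2ip x z - l2ip y z"
  using l2ip_add[OF _ L2_neg[of y], of x z] l2ip_scale[of "-1" y z] by simp

lemma l2ip_sum: "finite J \<Longrightarrow> (\<And>j. j \<in> J \<Longrightarrow> g j \<in> L2) \<Longrightarrow> z \<in> L2 \<Longrightarrow>
   l2ip (\<lambda>t. \<Sum>j\<in>J. g j t) z = (\<Sum>j\<in>J. l2ip (g j) z)"
proof (induction J rule: finite_induct)
  case empty then show ?case by (simp add: l2ip_def)
next
  case (insert a J)
  then show ?case using l2ip_add[of "g a" "\<lambda>t. \<Sum>j\<in>J. g j t" z] L2_sum[of J g] by simp
qed

lemma l2ip_nonneg: "x \<in> L2 \<Longrightarrow> l2ip x x \<ge> 0"
  unfolding l2ip_def L2_def by (auto intro: integral_nonneg simp: power2_eq_square)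

lemma l2ip_zero_orth:
  assumes g: "g \<in> L2" and h: "h \<in> L2" and z: "l2ip g g = 0"
  shows "l2ip g h = 0"
proof -
  have q: "0 \<le> 2 * s * l2ip g h + s^2 * l2ip h h" for s
  proof -
    have m: "(\<lambda>t. s * h t) \<in> L2" using h by (rule L2_scale)
    have "0 \<le> l2ip (\<lambda>t. g t + s * h t) (\<lambda>t. g t + s * h t)"
      using L2_add[OF g m] by (rule l2ip_nonneg)
    also have "\<dots> = l2ip g g + 2 * s * l2ip g h + s^2 * l2ip h h"
      using g h m L2_add[OF g m]
      apply (simp add: l2ip_add l2ip_scale)
      apply (subst (1 2) l2ip_sym[of _ "\<lambda>t. g t + s * h t"])
      apply (simp add: l2ip_add l2ip_scale l2ip_sym[of h g] power2_eq_square algebra_simps)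
      done
    finally show ?thesis using z by simp
  qed
  show ?thesis
  proof (rule ccontr)
    assume ne: "l2ip g h \<noteq> 0"
    have hh: "l2ip h h \<ge> 0" using h by (rule l2ip_nonneg)
    define s where "s = - l2ip g h / (l2ip h h + 1)"
    have "0 \<le> 2 * s * l2ip g h + s^2 * l2ip h h" by (rule q)
    also have "\<dots> = s * (2 * l2ip g h + s * l2ip h h)" by (simp add: power2_eq_square algebra_simps)
    finally have A: "0 \<le> s * (2 * l2ip g h + s * l2ip h h)" .
    let ?a = "l2ip g h" and ?b = "l2ip h h"
    have "s * (2 * ?a + s * ?b) = ?a^2 * (- 2 * (?b+1) + ?b) / (?b+1)^2"
      unfolding s_def using hh by (simp add: field_simps power2_eq_square) (simp add: add_divide_distrib diff_divide_distrib)
    moreover have "?a^2 * (- 2 * (?b+1) + ?b) / (?b+1)^2 < 0"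
      using hh ne by (intro divide_neg_pos mult_pos_neg) auto
    ultimately show False using A by linarith
  qed
qed


lemma nest_iter:
  fixes c :: "nat \<Rightarrow> nat \<Rightarrow> nat" and D G :: nat
  assumes nested: "\<And>d v w. d \<in> {2..D} \<Longrightarrow> v \<in> {1..G} \<Longrightarrow> w \<in> {1..G} \<Longrightarrow>
                   c d v = c d w \<Longrightarrow> c (d - 1) v = c (d - 1) w"
    and v: "v \<in> {1..G}" and w: "w \<in> {1..G}"
  shows "d \<le> D \<Longrightarrow> c d v = c d w \<Longrightarrow> j \<in> {1..d} \<Longrightarrow> c j v = c j w"
proof (induction d)
  case 0 then show ?case by simp
next
  case (Suc m)
  show ?case
  proof (cases "j = Suc m")
    case True then show ?thesis using Suc by simp
  next
    case False
    then have jm: "j \<in> {1..m}" using Suc.prems by auto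
    have "c (Suc m - 1) v = c (Suc m - 1) w"
      using nested[of "Suc m" v w] Suc.prems jm v w by auto
    then show ?thesis using Suc.IH[OF _ _ jm] Suc.prems by simp
  qed
qed

theorem proposition2:
  fixes G D :: nat
    and N :: "nat \<Rightarrow> nat"
    and X :: "nat \<Rightarrow> nat \<Rightarrow> real \<Rightarrow> real"
    and c :: "nat \<Rightarrow> nat \<Rightarrow> nat"
    and f :: "nat \<Rightarrow> nat \<Rightarrow> real"
    and psi :: "nat \<Rightarrow> nat \<Rightarrow> real \<Rightarrow> real"
  assumes G_pos: "G \<ge> 1"
    and D_pos: "D \<ge> 1"
    and N_pos: "\<And>v. v \<in> {1..G} \<Longrightarrow> N v \<ge> 1"
    and X_L2: "\<And>v n. v \<in> {1..G} \<Longrightarrow> n \<in> {1..N v} \<Longrightarrow> X v n \<in> L2"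
    and nested: "\<And>d v w. d \<in> {2..D} \<Longrightarrow> v \<in> {1..G} \<Longrightarrow> w \<in> {1..G} \<Longrightarrow>
                   c d v = c d w \<Longrightarrow> c (d - 1) v = c (d - 1) w"
    and f_pos: "\<And>d v. d \<in> {1..D} \<Longrightarrow> v \<in> {1..G} \<Longrightarrow> f d v > 0"
    and psi_eig: "\<And>d i. d \<in> {1..D} \<Longrightarrow> (\<exists>v\<in>{1..G}. c d v = i) \<Longrightarrow>
                   is_top_unit_eigenfunction (comm_op G N X f psi c d i) (psi d i)"
  shows "\<forall>v\<in>{1..G}. \<forall>d\<in>{1..D}. \<forall>d'\<in>{1..D}.
           l2ip (comm_phi psi c d v) (comm_phi psi c d' v) = (if d = d' then 1 else 0)"
proof -
  have phiL2: "comm_phi psi c d w \<in> L2" and phi1: "l2ip (comm_phi psi c d w) (comm_phi psi c d w) = 1"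
    if "d \<in> {1..D}" "w \<in> {1..G}" for d w
  proof -
    have "is_top_unit_eigenfunction (comm_op G N X f psi c d (c d w)) (psi d (c d w))"
      using psi_eig that by blast
    then show "comm_phi psi c d w \<in> L2" "l2ip (comm_phi psi c d w) (comm_phi psi c d w) = 1"
      unfolding is_top_unit_eigenfunction_def is_eigenfunction_def comm_phi_def l2norm_def
      by auto
  qed
  have Q: "\<forall>w\<in>{1..G}. \<forall>j\<in>{1..<d}. l2ip (comm_phi psi c d w) (comm_phi psi c j w) = 0"
    if "d \<in> {1..D}" for d
    using that
  proof (induction d rule: less_induct)
    case (less d)
    show ?case
    proof (intro ballI)
      fix w j assume w: "w \<in> {1..G}" and j: "j \<in> {1..<d}"
      define i where "i = c d w"
      define T where "T = comm_op G N X f psi c d i"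
      define K where "K = {v\<in>{1..G}. c d v = i}"
      have dD: "d \<in> {1..D}" using less.prems .
      have jD: "j \<in> {1..D}" using j dD by auto
      have "is_top_unit_eigenfunction T (psi d i)"
        unfolding T_def using psi_eig[OF dD] w i_def by blast
      then obtain lam where lam: "lam > 0" and pL2: "psi d i \<in> L2"
        and eq: "l2eq (T (psi d i)) (\<lambda>t. lam * psi d i t)"
        unfolding is_top_unit_eigenfunction_def is_eigenfunction_def by blast
      let ?pj = "comm_phi psi c j w"
      have pjL2: "?pj \<in> L2" using phiL2[OF jD w] .
      have orth: "l2ip (comm_phi psi c a v) (comm_phi psi c b v) = (if a = b then 1 else 0)"
        if "a \<in> {1..<d}" "b \<in> {1..<d}" "v \<in> {1..G}" for a b v
      proof -
        have aD: "a \<in> {1..D}" and bD: "b \<in> {1..D}" using that dD by auto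
        consider "a = b" | "a < b" | "b < a" by linarith
        then show ?thesis
        proof cases
          case 1 then show ?thesis using phi1[OF aD that(3)] by simp
        next
          case 2 then show ?thesis using less.IH[of b] bD that
            by (auto simp: l2ip_sym[of "comm_phi psi c a v"])
        next
          case 3 then show ?thesis using less.IH[of a] aD that by auto
        qed
      qed
      have RL2: "resid X psi c (d - 1) v n \<in> L2" if v: "v \<in> {1..G}" and n: "n \<in> {1..N v}" for v n
        unfolding resid_def
        using dD v
        by (intro L2_diff X_L2[OF v n] L2_sum L2_scale phiL2) auto
      have Rorth: "l2ip (resid X psi c (d - 1) v n) ?pj = 0"
        if v: "v \<in> K" and n: "n \<in> {1..N v}" for v n
      proof -
        have vG: "v \<in> {1..G}" and cv: "c d v = c d w" using v unfolding K_def i_def by auto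
        have same: "comm_phi psi c j v = ?pj"
        proof -
          have "d \<le> D" using dD by simp
          moreover have "j \<in> {1..d}" using j by simp
          ultimately have "c j v = c j w"
            using nest_iter[where c=c and D=D and G=G, OF nested vG w] cv by blast
          then show ?thesis unfolding comm_phi_def by simp
        qed
        have jv: "j \<in> {1..<d}" using j .
        let ?g = "\<lambda>a t. l2ip (X v n) (comm_phi psi c a v) * comm_phi psi c a v t"
        have gL2: "?g a \<in> L2" if "a \<in> {1..d-1}" for a
          using that dD vG by (intro L2_scale phiL2) auto
        have "l2ip (resid X psi c (d - 1) v n) ?pj
              = l2ip (X v n) ?pj - l2ip (\<lambda>t. \<Sum>a=1..d-1. ?g a t) ?pj"
          unfolding resid_def
          by (rule l2ip_diff[OF X_L2[OF vG n] L2_sum[OF _ gL2] pjL2]) auto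
        also have "l2ip (\<lambda>t. \<Sum>a=1..d-1. ?g a t) ?pj = (\<Sum>a=1..d-1. l2ip (?g a) ?pj)"
          by (rule l2ip_sum[OF _ gL2 pjL2]) auto
        also have "\<dots> = (\<Sum>a=1..d-1. l2ip (X v n) (comm_phi psi c a v) * (if a = j then 1 else 0))"
        proof (rule sum.cong[OF refl])
          fix a assume a: "a \<in> {1..d-1}"
          have "l2ip (?g a) ?pj = l2ip (X v n) (comm_phi psi c a v) * l2ip (comm_phi psi c a v) ?pj"
            by (rule l2ip_scale)
          also have "\<dots> = l2ip (X v n) (comm_phi psi c a v) * (if a = j then 1 else 0)"
          proof -
            have a': "a \<in> {1..<d}" using a by auto
            have "l2ip (comm_phi psi c a v) ?pj = (if a = j then 1 else 0)"
              using orth[OF a' jv vG] same by simp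
            then show ?thesis by simp
          qed
          finally show "l2ip (?g a) ?pj = l2ip (X v n) (comm_phi psi c a v) * (if a = j then 1 else 0)" .
        qed
        also have "\<dots> = l2ip (X v n) ?pj"
        proof -
          have "(\<Sum>a=1..d-1. l2ip (X v n) (comm_phi psi c a v) * (if a = j then 1 else 0))
               = (\<Sum>a=1..d-1. if a = j then l2ip (X v n) (comm_phi psi c a v) else 0)"
            by (rule sum.cong) auto
          also have "\<dots> = l2ip (X v n) (comm_phi psi c j v)"
            using j by (auto simp add: sum.delta)
          finally show ?thesis using same by simp
        qed
        finally show ?thesis by simp
      qed
      have covL2: "cov_op N X psi c d v (psi d i) \<in> L2" if v: "v \<in> {1..G}" for v
        unfolding cov_op_def
        using v by (intro L2_scale L2_sum RL2) auto
      have covorth: "l2ip (cov_op N X psi c d v (psi d i)) ?pj = 0" if v: "v \<in> K" for v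
      proof -
        have vG: "v \<in> {1..G}" using v unfolding K_def by auto
        let ?h = "\<lambda>n t. l2ip (resid X psi c (d - 1) v n) (psi d i) * resid X psi c (d - 1) v n t"
        have hL2: "?h n \<in> L2" if "n \<in> {1..N v}" for n
          using that vG by (intro L2_scale RL2) auto
        have "l2ip (cov_op N X psi c d v (psi d i)) ?pj
              = (1 / real (N v)) * l2ip (\<lambda>t. \<Sum>n=1..N v. ?h n t) ?pj"
          unfolding cov_op_def by (rule l2ip_scale)
        also have "l2ip (\<lambda>t. \<Sum>n=1..N v. ?h n t) ?pj = (\<Sum>n=1..N v. l2ip (?h n) ?pj)"
          by (rule l2ip_sum[OF _ hL2 pjL2]) auto
        also have "\<dots> = 0"
          using Rorth[OF v] by (simp add: l2ip_scale)
        finally show ?thesis by simp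
      qed
      have TL2: "T (psi d i) \<in> L2"
        unfolding T_def comm_op_def
        by (intro L2_sum L2_scale covL2) auto
      have Torth: "l2ip (T (psi d i)) ?pj = 0"
      proof -
        have "l2ip (T (psi d i)) ?pj = (\<Sum>v\<in>K. l2ip (\<lambda>t. f d v * cov_op N X psi c d v (psi d i) t) ?pj)"
          unfolding T_def comm_op_def K_def
          apply (rule l2ip_sum[OF _ _ pjL2])
           apply simp
          apply (rule L2_scale)
          apply (rule covL2)
          apply simp
          done
        also have "\<dots> = 0"
          using covorth by (simp add: l2ip_scale)
        finally show ?thesis .
      qed
      define g where "g = (\<lambda>t. T (psi d i) t - lam * psi d i t)"
      have gL2: "g \<in> L2" unfolding g_def by (intro L2_diff TL2 L2_scale pL2)
      have gg: "l2ip g g = 0" using eq unfolding l2eq_def l2norm_def g_def by simp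
      have "l2ip g ?pj = 0" by (rule l2ip_zero_orth[OF gL2 pjL2 gg])
      moreover have "l2ip g ?pj = l2ip (T (psi d i)) ?pj - lam * l2ip (psi d i) ?pj"
        unfolding g_def by (simp add: l2ip_diff[OF TL2 L2_scale[OF pL2] pjL2] l2ip_scale)
      ultimately have "l2ip (psi d i) ?pj = 0" using Torth lam by simp
      then show "l2ip (comm_phi psi c d w) ?pj = 0" unfolding i_def comm_phi_def .
    qed
  qed
  show ?thesis
  proof (intro ballI)
    fix v d d' assume v: "v \<in> {1..G}" and d: "d \<in> {1..D}" and d': "d' \<in> {1..D}"
    consider "d = d'" | "d' < d" | "d < d'" by linarith
    then show "l2ip (comm_phi psi c d v) (comm_phi psi c d' v) = (if d = d' then 1 else 0)"
    proof cases
      case 1 then show ?thesis using phi1[OF d v] by simp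
    next
      case 2 then show ?thesis using Q[OF d] v d' by auto
    next
      case 3
      have "l2ip (comm_phi psi c d' v) (comm_phi psi c d v) = 0" using Q[OF d'] v d 3 by auto
      moreover have "l2ip (comm_phi psi c d v) (comm_phi psi c d' v) = l2ip (comm_phi psi c d' v) (comm_phi psi c d v)"
        by (rule l2ip_sym)
      ultimately show ?thesis using 3 by simp
    qed
  qed
qed

end
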